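(* For all $v,w\in(-1,+\infty)$, $$(\ln(1+v))^2+(\ln(1+w))^2\ge\frac12\Big(\ln\big(1+\sqrt{v^2+w^2}\big)\Big)^2.$$ *)

theory Defs
  imports Complex_Main
begin

end

theory Submission
  imports Defs "HOL-Analysis.Analysis"
begin

lemma L1:
  fixes x :: real assumes "x > -1"
  shows "(ln (1 + \<bar>x\<bar>))^2 \<le> (ln (1 + x))^2"
proof (cases "x \<ge> 0")
  case True then show ?thesis by simp
next
  case False
  have h0: "(1 - x) * (1 + x) \<le> 1" by (simp add: algebra_simps)
  have h: "1 - x \<le> 1 / (1 + x)" using assms h0 by (simp add: le_divide_eq)
  have "ln (1 - x) \<le> ln (1 / (1 + x))" using h False assms by (subst ln_le_cancel_iff) auto
  also have "\<dots> = - ln (1 + x)" using assms by (simp add: ln_div)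
  finally have a: "ln (1 + \<bar>x\<bar>) \<le> - ln (1 + x)" using False by simp
  have b: "0 \<le> ln (1 + \<bar>x\<bar>)" by simp
  have "(ln (1 + \<bar>x\<bar>))^2 \<le> (- ln (1 + x))^2" using a b by (rule power_mono)
  then show ?thesis by simp
qed

lemma L2:
  fixes t r :: real assumes "0 \<le> t" "t \<le> 1" "0 \<le> r"
  shows "t * ln (1 + r) \<le> ln (1 + t * r)"
proof -
  have "(1 - t) * ln 1 + t * ln (1 + r) \<le> ln ((1 - t) *\<^sub>R 1 + t *\<^sub>R (1 + r))"
    using concave_onD[OF ln_concave, of t 1 "1 + r"] assms by auto
  moreover have "(1 - t) *\<^sub>R 1 + t *\<^sub>R (1 + r) = 1 + t * r" by (simp add: algebra_simps)
  moreover have "1 - t + t * (1 + r) = 1 + t * r" by (simp add: algebra_simps)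
  ultimately show ?thesis by simp
qed

lemma L3:
  fixes v w :: real
  assumes "v > -1" "w > -1" "\<bar>w\<bar> \<le> \<bar>v\<bar>"
  shows "(ln (1 + v))^2 + (ln (1 + w))^2 \<ge> (1/2) * (ln (1 + sqrt (v^2 + w^2)))^2"
proof -
  define r where "r = sqrt (v^2 + w^2)"
  define t where "t = 1 / sqrt 2"
  have r0: "r \<ge> 0" unfolding r_def by simp
  have t0: "0 \<le> t" "t \<le> 1" unfolding t_def by (auto simp: field_simps)
  have tt: "t^2 = 1/2" unfolding t_def by (simp add: power_divide)
  have "(t * r)^2 \<le> \<bar>v\<bar>^2"
    using assms(3) unfolding power_mult_distrib tt r_def
    by (simp add: power2_eq_square) (metis abs_mult_self_eq abs_le_square_iff power2_eq_square add_mono le_refl mult_2 field_sum_of_halves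
      order_trans)
  hence tr: "t * r \<le> \<bar>v\<bar>" using r0 t0 by (meson abs_ge_zero power2_le_imp_le)
  have "t * ln (1 + r) \<le> ln (1 + t * r)" using L2 t0 r0 by blast
  also have "\<dots> \<le> ln (1 + \<bar>v\<bar>)" proof -
    have "0 \<le> t * r" using t0 r0 by simp
    then show ?thesis using tr by (subst ln_le_cancel_iff) auto
  qed
  finally have a: "t * ln (1 + r) \<le> ln (1 + \<bar>v\<bar>)" .
  have b: "0 \<le> t * ln (1 + r)" using t0 r0 by simp
  have "(t * ln (1 + r))^2 \<le> (ln (1 + \<bar>v\<bar>))^2" using power_mono[OF a b] .
  also have "\<dots> \<le> (ln (1 + v))^2" using L1 assms by blast
  finally have "(1/2) * (ln (1 + r))^2 \<le> (ln (1 + v))^2"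
    unfolding power_mult_distrib tt .
  then show ?thesis unfolding r_def by (smt (verit) zero_le_power2)
qed

theorem lemmaA1:
  fixes v w :: real
  assumes "v > -1" and "w > -1"
  shows "(ln (1 + v))^2 + (ln (1 + w))^2 \<ge> (1/2) * (ln (1 + sqrt (v^2 + w^2)))^2"
proof (cases "\<bar>w\<bar> \<le> \<bar>v\<bar>")
  case True then show ?thesis using L3 assms by blast
next
  case False
  then have "(ln (1 + w))^2 + (ln (1 + v))^2 \<ge> (1/2) * (ln (1 + sqrt (w^2 + v^2)))^2"
    using L3 assms by simp
  then show ?thesis by (simp add: add.commute)
qed

end
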